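(* Let $F$ be a field with $\operatorname{char}F\ne2$, $D$ a finite-dimensional central division $F$-algebra with involution $\ast$, $\eta\in F$ with $\eta\eta^\ast=1$, $n\ge1$, $A\in M_n(D)$ invertible with $\eta A^\ast=A$ (where $[x_{ij}]^\ast=[x_{ji}^\ast]$), and $X^\#=A^{-1}X^\ast A$. If $\eta\neq-1$ or $\ast|_D\neq\mathrm{id}$, then the following are equivalent: (1) $\#$ is formally real on $M_n(D)$; (2) there exists a $1$-hermitian cone on $(M_n(D),\#)$ containing the identity matrix $I$; (3) there exists an $\eta$-hermitian cone on $(M_n(D),\ast)$ containing $A$; (4) there exist an invertible $P\in M_n(D)$ with $P^\ast AP=\mathrm{diag}(d_1,\dots,d_n)$ and an $\eta$-hermitian cone on $(D,\ast)$ containing $d_1,\dots,d_n$. If $\eta=-1$ and $\ast|_D=\mathrm{id}$, then $\#$ is not formally real.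
   Context: An involution $\#$ on a ring $R$ is formally real if every finite sum of nonzero elements of the form $rr^\#$ ($r\in R$) is nonzero. For a ring $R$ with involution $\ast$ whose center contains $F$ with $F^\ast\subseteq F$, and $\varepsilon\in F$ with $\varepsilon\varepsilon^\ast=1$, an element $a\in R$ is $\varepsilon$-hermitian if $\varepsilon a^\ast=a$; $S_\varepsilon(R)$ is the set of such elements. An $\varepsilon$-hermitian cone on $(R,\ast)$ is a subset $M\subseteq S_\varepsilon(R)$ with $M+M\subseteq M$, $aMa^\ast\subseteq M$ for every $a\in R$, and $M\cap-M=\{0\}$. *)

theory Defs
  imports "HOL-Analysis.Analysis"
begin

text \<open>An involution on a (possibly noncommutative) ring: additive anti-automorphism of order 2.\<close>
definition is_involution :: "('a::ring_1 \<Rightarrow> 'a) \<Rightarrow> bool" where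
  "is_involution s \<longleftrightarrow> (\<forall>x y. s (x + y) = s x + s y) \<and> (\<forall>x y. s (x * y) = s y * s x)
      \<and> (\<forall>x. s (s x) = x)"

text \<open>The center of a ring.\<close>
definition center :: "'a::ring_1 set" where
  "center = {z. \<forall>x. z * x = x * z}"

text \<open>D is finite-dimensional (as a left vector space) over its center F.\<close>
definition fin_dim_over_center :: "'a::ring_1 itself \<Rightarrow> bool" where
  "fin_dim_over_center _ \<longleftrightarrow> (\<exists>B::'a set. finite B \<and>
      (\<forall>x. \<exists>c. (\<forall>b\<in>B. c b \<in> center) \<and> x = (\<Sum>b\<in>B. c b * b)))"

text \<open>Generic ring notions, parametrised by the multiplication (so that they can be applied
  both to D and to matrices over D, where multiplication is the matrix product).\<close>

definition formally_real :: "('r::ab_group_add \<Rightarrow> 'r \<Rightarrow> 'r) \<Rightarrow> ('r \<Rightarrow> 'r) \<Rightarrow> bool" where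
  "formally_real mul invl \<longleftrightarrow>
     (\<forall>xs. xs \<noteq> [] \<and> (\<forall>x\<in>set xs. mul x (invl x) \<noteq> 0)
        \<longrightarrow> sum_list (map (\<lambda>x. mul x (invl x)) xs) \<noteq> 0)"

definition herm_set :: "('r \<Rightarrow> 'r \<Rightarrow> 'r) \<Rightarrow> ('r \<Rightarrow> 'r) \<Rightarrow> 'r \<Rightarrow> 'r set" where
  "herm_set mul invl \<epsilon> = {a. mul \<epsilon> (invl a) = a}"

definition herm_cone :: "('r::ab_group_add \<Rightarrow> 'r \<Rightarrow> 'r) \<Rightarrow> ('r \<Rightarrow> 'r) \<Rightarrow> 'r \<Rightarrow> 'r set \<Rightarrow> bool" where
  "herm_cone mul invl \<epsilon> M \<longleftrightarrow> M \<subseteq> herm_set mul invl \<epsilon>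
     \<and> (\<forall>x\<in>M. \<forall>y\<in>M. x + y \<in> M)
     \<and> (\<forall>a. \<forall>m\<in>M. mul (mul a m) (invl a) \<in> M)
     \<and> M \<inter> uminus ` M = {0}"

text \<open>Conjugate transpose of a matrix over D: [x_ij]^* = [x_ji^*].\<close>
definition mstar :: "('d \<Rightarrow> 'd) \<Rightarrow> 'd^'n^'n \<Rightarrow> 'd^'n^'n" where
  "mstar s X = (\<chi> i j. s (X $ j $ i))"

definition diag_mat :: "('n::finite \<Rightarrow> 'd::zero) \<Rightarrow> 'd^'n^'n" where
  "diag_mat d = (\<chi> i j. if i = j then d i else 0)"

end

theory Submission
  imports Defs
begin

(* ---- A1 ---- *)


context
  fixes s :: "'d::division_ring \<Rightarrow> 'd"
  assumes inv: "is_involution s"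
begin

lemma s_add: "s (x + y) = s x + s y" using inv unfolding is_involution_def by blast
lemma s_mult: "s (x * y) = s y * s x" using inv unfolding is_involution_def by blast
lemma s_s[simp]: "s (s x) = x" using inv unfolding is_involution_def by blast
lemma s_0[simp]: "s 0 = 0" using s_add[of 0 0] by simp
lemma s_1[simp]: "s 1 = 1"
proof -
  have "s (s 1) = s (s 1) * s 1" using s_mult[of 1 "s 1"] by simp
  thus ?thesis by simp
qed
lemma s_minus: "s (- x) = - s x" using s_add[of x "-x"] by (simp add: add_eq_0_iff2)
lemma s_sum: "s (sum f F) = (\<Sum>i\<in>F. s (f i))"
  by (induction F rule: infinite_finite_induct) (auto simp: s_add)
lemma s_eq0[simp]: "s x = 0 \<longleftrightarrow> x = 0" by (metis s_0 s_s)

lemma mstar_entry[simp]: "mstar s X $ i $ j = s (X $ j $ i)" by (simp add: mstar_def)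

lemma mstar_mult: "mstar s (X ** Y) = mstar s Y ** mstar s X"
  by (simp add: vec_eq_iff matrix_matrix_mult_def s_sum s_mult)

lemma mstar_mstar[simp]: "mstar s (mstar s X) = X" by (simp add: vec_eq_iff)
lemma mstar_add: "mstar s (X + Y) = mstar s X + mstar s Y" by (simp add: vec_eq_iff s_add)
lemma mstar_zero[simp]: "mstar s 0 = 0" by (simp add: vec_eq_iff)
lemma mstar_mat: "mstar s (mat c) = mat (s c)" by (simp add: vec_eq_iff mat_def)

lemma s_center: "c \<in> center \<Longrightarrow> s c \<in> center"
  unfolding center_def
proof safe
  fix x assume "\<forall>x. c * x = x * c"
  hence "s x * c = c * s x" by metis
  hence "s (s x * c) = s (c * s x)" by simp
  thus "s c * x = x * s c" by (simp add: s_mult)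
qed

end

lemma mat_mult_entry: "(mat c ** X) $ i $ j = c * X $ i $ j"
  by (simp add: matrix_matrix_mult_def mat_def if_distrib if_distribR sum.delta cong: if_cong)
lemma mult_mat_entry: "(X ** mat c) $ i $ j = X $ i $ j * c"
  by (simp add: matrix_matrix_mult_def mat_def if_distrib if_distribR sum.delta' cong: if_cong)
lemma mat_comm: "(c::'a::ring_1) \<in> center \<Longrightarrow> mat c ** X = X ** mat c"
  by (simp add: vec_eq_iff mat_mult_entry mult_mat_entry center_def)
lemma mat_mat: "mat a ** mat (b::'a::semiring_1) = mat (a * b)"
  by (simp add: vec_eq_iff mat_mult_entry) (simp add: mat_def)
lemma matrix_add_rdistrib: "((B + C) ** (A::'a::semiring_1^'n^'m)) = (B ** A) + (C ** A)"
  by (vector matrix_matrix_mult_def sum.distrib[symmetric] field_simps)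
lemma matrix_minus_rdistrib: "((- B) ** (A::'a::ring_1^'n^'m)) = - (B ** A)"
  by (vector matrix_matrix_mult_def sum_negf[symmetric])
lemma matrix_minus_ldistrib: "(A ** (- B)) = - ((A::'a::ring_1^'n^'m) ** B)"
  by (vector matrix_matrix_mult_def sum_negf[symmetric])

lemma sum_list_mult_lr:
  "L ** sum_list (map f xs) ** R = sum_list (map (\<lambda>x. L ** f x ** (R::'a::semiring_1^'n^'n)) xs)"
  by (induction xs) (auto simp: matrix_add_ldistrib matrix_add_rdistrib)

lemma sum_list_entry: "sum_list xs $ i = sum_list (map (\<lambda>x. x $ i) xs)"
  by (induction xs) auto



(* ---- A2 ---- *)


lemma FR_iff:
  "formally_real mul J \<longleftrightarrow>
   (\<forall>xs. sum_list (map (\<lambda>x. mul x (J x)) xs) = 0 \<longrightarrow> (\<forall>x\<in>set xs. mul x (J x) = 0))"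
proof -
  have filt: "sum_list (map f xs) = sum_list (map f (filter (\<lambda>x. f x \<noteq> 0) xs))"
    for f :: "'a \<Rightarrow> 'b::ab_group_add" and xs by (induction xs) auto
  show ?thesis unfolding formally_real_def
  proof safe
    fix xs x assume H: "\<forall>xs. xs \<noteq> [] \<and> (\<forall>x\<in>set xs. mul x (J x) \<noteq> 0) \<longrightarrow>
             sum_list (map (\<lambda>x. mul x (J x)) xs) \<noteq> 0"
      and s: "sum_list (map (\<lambda>x. mul x (J x)) xs) = 0" and x: "x \<in> set xs"
    show "mul x (J x) = 0"
    proof (rule ccontr)
      assume "mul x (J x) \<noteq> 0"
      hence "filter (\<lambda>x. mul x (J x) \<noteq> 0) xs \<noteq> []" using x by (induction xs) auto
      with H[rule_format, of "filter (\<lambda>x. mul x (J x) \<noteq> 0) xs"] s filt[of "\<lambda>x. mul x (J x)" xs]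
      show False by auto
    qed
  next
    fix xs assume "\<forall>xs. sum_list (map (\<lambda>x. mul x (J x)) xs) = 0 \<longrightarrow> (\<forall>x\<in>set xs. mul x (J x) = 0)"
      "xs \<noteq> []" "\<forall>x\<in>set xs. mul x (J x) \<noteq> 0" "sum_list (map (\<lambda>x. mul x (J x)) xs) = 0"
    thus False by (cases xs) auto
  qed
qed

definition ZG :: "('r::ab_group_add \<Rightarrow> 'r \<Rightarrow> 'r) \<Rightarrow> ('r \<Rightarrow> 'r) \<Rightarrow> 'r set \<Rightarrow> bool" where
  "ZG mul J G \<longleftrightarrow> (\<forall>ps. set ps \<subseteq> G \<times> UNIV \<longrightarrow>
     sum_list (map (\<lambda>(g,x). mul (mul x g) (J x)) ps) = 0 \<longrightarrow>
     (\<forall>(g,x)\<in>set ps. mul (mul x g) (J x) = 0))"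

definition Z :: "('r::ab_group_add \<Rightarrow> 'r \<Rightarrow> 'r) \<Rightarrow> ('r \<Rightarrow> 'r) \<Rightarrow> 'r \<Rightarrow> bool" where
  "Z mul J c \<longleftrightarrow> (\<forall>xs. sum_list (map (\<lambda>x. mul (mul x c) (J x)) xs) = 0 \<longrightarrow>
     (\<forall>x\<in>set xs. mul (mul x c) (J x) = 0))"

definition gcone :: "('r::ab_group_add \<Rightarrow> 'r \<Rightarrow> 'r) \<Rightarrow> ('r \<Rightarrow> 'r) \<Rightarrow> 'r set \<Rightarrow> 'r set" where
  "gcone mul J G = {sum_list (map (\<lambda>(g,x). mul (mul x g) (J x)) ps) | ps. set ps \<subseteq> G \<times> UNIV}"

lemma Z_ZG: "Z mul J c \<longleftrightarrow> ZG mul J {c}"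
  unfolding Z_def ZG_def
proof safe
  fix ps g x
  assume H: "\<forall>xs. sum_list (map (\<lambda>x. mul (mul x c) (J x)) xs) = 0 \<longrightarrow> (\<forall>x\<in>set xs. mul (mul x c) (J x) = 0)"
    and ps: "set ps \<subseteq> {c} \<times> UNIV" and s: "sum_list (map (\<lambda>(g, x). mul (mul x g) (J x)) ps) = 0"
    and gx: "(g, x) \<in> set ps"
  have e: "map (\<lambda>(g, x). mul (mul x g) (J x)) ps = map (\<lambda>x. mul (mul x c) (J x)) (map snd ps)"
    using ps by (induction ps) auto
  show "mul (mul x g) (J x) = 0" using H[rule_format, of "map snd ps"] s e gx ps by force
next
  fix xs x
  assume H: "\<forall>ps. set ps \<subseteq> {c} \<times> UNIV \<longrightarrow> sum_list (map (\<lambda>(g, x). mul (mul x g) (J x)) ps) = 0 \<longrightarrow>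
       (\<forall>(g, x)\<in>set ps. mul (mul x g) (J x) = 0)"
    and s: "sum_list (map (\<lambda>x. mul (mul x c) (J x)) xs) = 0" and x: "x \<in> set xs"
  have e: "map (\<lambda>(g, x). mul (mul x g) (J x)) (map (Pair c) xs) = map (\<lambda>x. mul (mul x c) (J x)) xs"
    by (induction xs) auto
  have "(c,x) \<in> set (map (Pair c) xs)" using x by auto
  moreover have "set (map (Pair c) xs) \<subseteq> {c} \<times> UNIV" by auto
  moreover have "sum_list (map (\<lambda>(g, x). mul (mul x g) (J x)) (map (Pair c) xs)) = 0" using s by (simp only: e)
  ultimately have "\<forall>(g, x)\<in>set (map (Pair c) xs). mul (mul x g) (J x) = 0" "(c,x) \<in> set (map (Pair c) xs)"
    using H by blast+
  thus "mul (mul x c) (J x) = 0" by fastforce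
qed

lemma cone_zero_mem: "herm_cone mul J e M \<Longrightarrow> 0 \<in> M"
  unfolding herm_cone_def by blast

lemma cone_sum_list_mem: "herm_cone mul J e M \<Longrightarrow> set xs \<subseteq> M \<Longrightarrow> sum_list xs \<in> M"
  by (induction xs) (auto simp: cone_zero_mem, auto simp: herm_cone_def)

lemma cone_neg: assumes C: "herm_cone mul J e M" and x: "x \<in> M" "- x \<in> M" shows "x = 0"
proof -
  have E: "M \<inter> uminus ` M = {0}" using C unfolding herm_cone_def by simp
  have "x \<in> uminus ` M" using x(2) by (metis image_eqI minus_minus)
  hence "x \<in> M \<inter> uminus ` M" using x(1) by simp
  thus "x = 0" unfolding E by simp
qed

lemma cone_list_zero: assumes C: "herm_cone mul J e M"
  shows "set xs \<subseteq> M \<Longrightarrow> sum_list xs = 0 \<Longrightarrow> \<forall>x\<in>set xs. x = 0"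
proof (induction xs)
  case (Cons a xs)
  have aM: "a \<in> M" and xsM: "set xs \<subseteq> M" using Cons(2) by auto
  have sM: "sum_list xs \<in> M" using cone_sum_list_mem[OF C xsM] .
  have e: "a = - sum_list xs" using Cons(3) by (simp add: eq_neg_iff_add_eq_0)
  have "- a \<in> M" using sM e by simp
  hence a0: "a = 0" using cone_neg[OF C aM] by blast
  hence "sum_list xs = 0" using Cons(3) by simp
  thus ?case using Cons(1)[OF xsM] a0 by simp
qed simp

lemma cone_sum_mem: assumes C: "herm_cone mul J e M" shows "finite F \<Longrightarrow> (\<forall>j\<in>F. f j \<in> M) \<Longrightarrow> sum f F \<in> M"
proof (induction F rule: finite_induct)
  case empty thus ?case using cone_zero_mem[OF C] by simp
next
  case (insert a F)
  thus ?case using C unfolding herm_cone_def by simp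
qed

lemma cone_sum_zero: assumes C: "herm_cone mul J e M" shows "finite F \<Longrightarrow> (\<forall>j\<in>F. f j \<in> M) \<Longrightarrow> sum f F = 0 \<Longrightarrow> \<forall>j\<in>F. f j = 0"
proof (induction F rule: finite_induct)
  case (insert a F)
  have fM: "\<forall>j\<in>F. f j \<in> M" and aM: "f a \<in> M" using insert(4) by auto
  have sM: "sum f F \<in> M" using cone_sum_mem[OF C insert(1) fM] .
  have e: "f a = - sum f F" using insert(1,2,5) by (simp add: eq_neg_iff_add_eq_0)
  have "- f a \<in> M" using sM e by simp
  hence a0: "f a = 0" using cone_neg[OF C aM] by blast
  hence "sum f F = 0" using insert(1,2,5) by simp
  thus ?case using insert(3)[OF fM] a0 by simp
qed simp

lemma cone_imp_ZG:
  assumes C: "herm_cone mul J e M" and G: "G \<subseteq> M"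
  shows "ZG mul J G"
  unfolding ZG_def
proof (intro allI impI)
  fix ps :: "('a \<times> 'a) list" assume ps: "set ps \<subseteq> G \<times> UNIV"
    and s: "sum_list (map (\<lambda>(g, x). mul (mul x g) (J x)) ps) = 0"
  have conj: "\<forall>a. \<forall>m\<in>M. mul (mul a m) (J a) \<in> M" using C unfolding herm_cone_def by simp
  have "set (map (\<lambda>(g, x). mul (mul x g) (J x)) ps) \<subseteq> M"
  proof
    fix y assume "y \<in> set (map (\<lambda>(g, x). mul (mul x g) (J x)) ps)"
    then obtain g x where "(g,x) \<in> set ps" "y = mul (mul x g) (J x)" by auto
    moreover have "g \<in> M" using calculation(1) ps G by auto
    ultimately show "y \<in> M" using conj by simp
  qed
  from cone_list_zero[OF C this s] show "\<forall>(g, x)\<in>set ps. mul (mul x g) (J x) = 0" by auto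
qed

lemma ZG_imp_cone:
  fixes mul :: "'r::ab_group_add \<Rightarrow> 'r \<Rightarrow> 'r"
  assumes assoc: "\<And>a b c. mul a (mul b c) = mul (mul a b) c"
    and ld: "\<And>a b c. mul a (b + c) = mul a b + mul a c"
    and rd: "\<And>a b c. mul (b + c) a = mul b a + mul c a"
    and Jadd: "\<And>a b. J (a + b) = J a + J b"
    and Jmul: "\<And>a b. J (mul a b) = mul (J b) (J a)"
    and JJ: "\<And>a. J (J a) = a"
    and ecomm: "\<And>a. mul e a = mul a e"
    and herm: "\<And>g. g \<in> G \<Longrightarrow> mul e (J g) = g"
    and unit: "\<And>g. g \<in> G \<Longrightarrow> \<exists>x. mul (mul x g) (J x) = g"
    and Z: "ZG mul J G"
  shows "herm_cone mul J e (gcone mul J G) \<and> G \<subseteq> gcone mul J G"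
proof -
  let ?T = "\<lambda>(g,x). mul (mul x g) (J x)"
  have J0: "J 0 = 0" using Jadd[of 0 0] by simp
  have m0: "mul a 0 = 0" for a using ld[of a 0 0] by simp
  have m0': "mul 0 a = 0" for a using rd[where a=a and b=0 and c=0] by simp
  have herm_ps: "set ps \<subseteq> G \<times> UNIV \<Longrightarrow> mul e (J (sum_list (map ?T ps))) = sum_list (map ?T ps)" for ps
  proof (induction ps)
    case Nil thus ?case by (simp add: J0 m0)
  next
    case (Cons p ps)
    obtain g x where p: "p = (g,x)" by fastforce
    have g: "g \<in> G" using Cons p by auto
    have "mul e (J (mul (mul x g) (J x))) = mul e (mul x (mul (J g) (J x)))"
      by (simp add: Jmul JJ)
    also have "\<dots> = mul (mul x e) (mul (J g) (J x))" by (simp add: assoc ecomm)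
    also have "\<dots> = mul x (mul (mul e (J g)) (J x))" by (simp only: assoc)
    also have "\<dots> = mul (mul x g) (J x)" by (simp add: herm[OF g] assoc)
    finally have "mul e (J (mul (mul x g) (J x))) = mul (mul x g) (J x)" .
    thus ?case using Cons p by (simp add: Jadd ld)
  qed
  have conj: "mul (mul a (sum_list (map ?T ps))) (J a) = sum_list (map ?T (map (\<lambda>(g,x). (g, mul a x)) ps))" for a ps
  proof (induction ps)
    case Nil thus ?case by (simp add: m0 m0')
  next
    case (Cons p ps)
    obtain g x where p: "p = (g,x)" by fastforce
    have "mul (mul a (mul (mul x g) (J x))) (J a) = mul (mul (mul a x) g) (J (mul a x))"
      by (simp add: Jmul assoc)
    thus ?case using Cons p by (simp add: ld rd)
  qed
  have H: "\<forall>ps. set ps \<subseteq> G \<times> UNIV \<longrightarrow> sum_list (map ?T ps) = 0 \<longrightarrow> (\<forall>(g,x)\<in>set ps. mul (mul x g) (J x) = 0)"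
    using Z unfolding ZG_def .
  have zero: "set ps \<subseteq> G \<times> UNIV \<Longrightarrow> sum_list (map ?T ps) = 0 \<Longrightarrow> \<forall>(g,x)\<in>set ps. mul (mul x g) (J x) = 0" for ps
    using H by blast
  have sz: "(\<forall>(g,x)\<in>set ps. mul (mul x g) (J x) = 0) \<Longrightarrow> sum_list (map ?T ps) = 0" for ps
    by (induction ps) (simp_all add: case_prod_unfold)
  show ?thesis
  proof (intro conjI)
    show "G \<subseteq> gcone mul J G"
    proof
      fix g assume g: "g \<in> G"
      then obtain x where "mul (mul x g) (J x) = g" using unit by blast
      hence e: "g = sum_list (map ?T [(g,x)])" by simp
      have "set [(g,x)] \<subseteq> G \<times> UNIV" using g by simp
      with e show "g \<in> gcone mul J G" unfolding gcone_def by (intro CollectI exI[of _ "[(g,x)]"] conjI)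
    qed
    show "herm_cone mul J e (gcone mul J G)"
      unfolding herm_cone_def
    proof (intro conjI)
      show "gcone mul J G \<subseteq> herm_set mul J e"
      proof
        fix y assume "y \<in> gcone mul J G"
        then obtain ps where "y = sum_list (map ?T ps)" "set ps \<subseteq> G \<times> UNIV" unfolding gcone_def by blast
        thus "y \<in> herm_set mul J e" unfolding herm_set_def using herm_ps[of ps] by simp
      qed
      show "\<forall>x\<in>gcone mul J G. \<forall>y\<in>gcone mul J G. x + y \<in> gcone mul J G"
      proof (intro ballI)
        fix x y assume "x \<in> gcone mul J G" "y \<in> gcone mul J G"
        then obtain ps qs where "x = sum_list (map ?T ps)" "set ps \<subseteq> G \<times> UNIV"
          "y = sum_list (map ?T qs)" "set qs \<subseteq> G \<times> UNIV" unfolding gcone_def by blast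
        hence "x + y = sum_list (map ?T (ps @ qs))" "set (ps @ qs) \<subseteq> G \<times> UNIV" by auto
        thus "x + y \<in> gcone mul J G" unfolding gcone_def by blast
      qed
      show "\<forall>a. \<forall>m\<in>gcone mul J G. mul (mul a m) (J a) \<in> gcone mul J G"
      proof (intro allI ballI)
        fix a m assume "m \<in> gcone mul J G"
        then obtain ps where "m = sum_list (map ?T ps)" "set ps \<subseteq> G \<times> UNIV" unfolding gcone_def by blast
        moreover have "set (map (\<lambda>(g,x). (g, mul a x)) ps) \<subseteq> G \<times> UNIV" using calculation(2) by auto
        ultimately show "mul (mul a m) (J a) \<in> gcone mul J G" unfolding gcone_def using conj by blast
      qed
      show "gcone mul J G \<inter> uminus ` gcone mul J G = {0}"
      proof
        have "0 \<in> gcone mul J G" unfolding gcone_def by (rule CollectI, rule exI[of _ "[]"]) simp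
        thus "{0} \<subseteq> gcone mul J G \<inter> uminus ` gcone mul J G" by (simp add: image_iff)
        show "gcone mul J G \<inter> uminus ` gcone mul J G \<subseteq> {0}"
        proof
          fix x assume "x \<in> gcone mul J G \<inter> uminus ` gcone mul J G"
          then obtain ps where x: "x = sum_list (map ?T ps)" "set ps \<subseteq> G \<times> UNIV"
            unfolding gcone_def by blast
          obtain y where y: "y \<in> gcone mul J G" "x = - y" using \<open>x \<in> gcone mul J G \<inter> uminus ` gcone mul J G\<close> by blast
          then obtain qs where q: "y = sum_list (map ?T qs)" "set qs \<subseteq> G \<times> UNIV"
            unfolding gcone_def by blast
          have "- x = sum_list (map ?T qs)" using y q by simp
          hence "sum_list (map ?T (ps @ qs)) = x + (- x)" using x by simp
          hence "sum_list (map ?T (ps @ qs)) = 0" "set (ps @ qs) \<subseteq> G \<times> UNIV" using x q by auto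
          hence "\<forall>(g,x)\<in>set (ps @ qs). mul (mul x g) (J x) = 0" by (rule zero[rotated])
          hence "\<forall>(g,x)\<in>set ps. mul (mul x g) (J x) = 0" by auto
          thus "x \<in> {0}" using x sz by auto
        qed
      qed
    qed
  qed
qed

lemma Z_congr:
  assumes assoc: "\<And>a b c. mul a (mul b c) = mul (mul a b) c"
    and Jmul: "\<And>a b. J (mul a b) = mul (J b) (J a)"
    and Z: "Z mul J c"
  shows "Z mul J (mul (mul q c) (J q))"
  unfolding Z_def
proof (intro allI impI ballI)
  fix xs x assume s: "sum_list (map (\<lambda>x. mul (mul x (mul (mul q c) (J q))) (J x)) xs) = 0" and x: "x \<in> set xs"
  have e: "mul (mul x (mul (mul q c) (J q))) (J x) = mul (mul (mul x q) c) (J (mul x q))" for x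
    by (simp add: Jmul assoc)
  have "sum_list (map (\<lambda>y. mul (mul y c) (J y)) (map (\<lambda>x. mul x q) xs)) = 0"
    using s by (simp add: e comp_def)
  moreover have "mul x q \<in> set (map (\<lambda>x. mul x q) xs)" using x by auto
  ultimately have "mul (mul (mul x q) c) (J (mul x q)) = 0" using Z unfolding Z_def by (simp only:)
  thus "mul (mul x (mul (mul q c) (J q))) (J x) = 0" by (simp only: e)
qed



(* ---- A3 ---- *)


lemma mat1_mult_mat: "X ** mat a ** mat (b::'a::semiring_1) = X ** mat (a * b)"
  by (metis mat_mat matrix_mul_assoc)

lemma mat_pull: "(c::'a::ring_1) \<in> center \<Longrightarrow> X ** mat c ** Y = mat c ** X ** Y"
  by (simp add: mat_comm)

locale setting =
  fixes s :: "'d::division_ring \<Rightarrow> 'd" and \<eta> :: 'd and A :: "'d^'n::finite^'n"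
  assumes inv: "is_involution s"
    and eta_F: "\<eta> \<in> center"
    and eta_unit: "\<eta> * s \<eta> = 1"
    and A_inv: "invertible A"
    and A_herm: "mat \<eta> ** mstar s A = A"
begin

lemmas [simp] = mstar_mstar[OF inv] s_s[OF inv] s_0[OF inv] s_1[OF inv] s_eq0[OF inv]

definition Ai where "Ai = matrix_inv A"
definition Jh where "Jh X = Ai ** mstar s X ** A"

lemma AAi: "A ** Ai = mat 1" and AiA: "Ai ** A = mat 1"
proof -
  obtain B where "A ** B = mat 1 \<and> B ** A = mat 1" using A_inv unfolding invertible_def by blast
  hence "A ** Ai = mat 1 \<and> Ai ** A = mat 1" unfolding Ai_def matrix_inv_def by (rule someI)
  thus "A ** Ai = mat 1" "Ai ** A = mat 1" by auto
qed

lemma AAi2[simp]: "X ** A ** Ai = X" by (metis AAi matrix_mul_assoc matrix_mul_rid)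
lemma AiA2[simp]: "X ** Ai ** A = X" by (metis AiA matrix_mul_assoc matrix_mul_rid)

lemma seta_F: "s \<eta> \<in> center" using s_center[OF inv eta_F] .
lemma seta_unit: "s \<eta> * \<eta> = 1"
proof -
  have "\<eta> * s \<eta> = s \<eta> * \<eta>" using eta_F by (simp add: center_def)
  thus ?thesis using eta_unit by simp
qed

lemma mstarA: "mstar s A = mat (s \<eta>) ** A"
proof -
  have "mat (s \<eta>) ** A = mat (s \<eta>) ** (mat \<eta> ** mstar s A)" using A_herm by simp
  also have "\<dots> = mstar s A" by (simp add: matrix_mul_assoc mat_mat seta_unit)
  finally show ?thesis by simp
qed

lemma mstarAi: "mstar s Ai = Ai ** mat \<eta>"
proof -
  have 1: "mstar s Ai ** mstar s A = mat 1"
    using mstar_mult[OF inv, of A Ai] AAi by (simp add: mstar_mat[OF inv] s_1[OF inv])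
  have "Ai ** mat \<eta> = mstar s Ai ** mstar s A ** Ai ** mat \<eta>" using 1 by simp
  also have "\<dots> = mstar s Ai ** mat (s \<eta>) ** mat \<eta>" by (simp add: mstarA matrix_mul_assoc)
  also have "\<dots> = mstar s Ai" by (simp add: mat1_mult_mat seta_unit)
  finally show ?thesis by simp
qed

lemma Jh_add: "Jh (X + Y) = Jh X + Jh Y"
  unfolding Jh_def by (simp add: mstar_add[OF inv] matrix_add_ldistrib matrix_add_rdistrib)

lemma Jh_mult: "Jh (X ** Y) = Jh Y ** Jh X"
  unfolding Jh_def by (simp add: mstar_mult[OF inv] matrix_mul_assoc)

lemma Jh_Jh: "Jh (Jh X) = X"
proof -
  have "Jh (Jh X) = Ai ** (mstar s A ** X ** mstar s Ai) ** A"
    unfolding Jh_def by (simp add: mstar_mult[OF inv] matrix_mul_assoc)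
  also have "\<dots> = Ai ** mat (s \<eta>) ** A ** X ** Ai ** mat \<eta> ** A"
    by (simp add: mstarA mstarAi matrix_mul_assoc)
  also have "\<dots> = mat (s \<eta>) ** X ** Ai ** mat \<eta> ** A"
    by (simp add: mat_comm[OF seta_F, symmetric] matrix_mul_assoc)
  also have "\<dots> = mat (s \<eta>) ** X ** mat \<eta> ** Ai ** A"
    by (simp add: mat_comm[OF eta_F] matrix_mul_assoc[symmetric])
  also have "\<dots> = mat (s \<eta>) ** X ** mat \<eta>" by simp
  also have "\<dots> = mat (s \<eta>) ** (mat \<eta> ** X)" by (simp only: mat_comm[OF eta_F] matrix_mul_assoc)
  also have "\<dots> = X" by (simp add: matrix_mul_assoc mat_mat seta_unit)
  finally show ?thesis .
qed

lemma Jh_1: "Jh (mat 1) = mat 1" unfolding Jh_def by (simp add: mstar_mat[OF inv] s_1[OF inv] AiA)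

lemma A_herm': "mstar s A ** mat \<eta> = A" using A_herm by (simp add: mat_comm[OF eta_F])

lemma R1: "formally_real (**) Jh \<longleftrightarrow> Z (**) Jh (mat 1)"
  unfolding FR_iff Z_def by simp

lemma R2: "Z (**) Jh (mat 1) \<longleftrightarrow> (\<exists>M. herm_cone (**) Jh (mat 1) M \<and> mat 1 \<in> M)"
proof
  assume Z: "Z (**) Jh (mat 1)"
  have "herm_cone (**) Jh (mat 1) (gcone (**) Jh {mat 1}) \<and> {mat 1} \<subseteq> gcone (**) Jh {mat 1}"
  proof (rule ZG_imp_cone)
    show "ZG (**) Jh {mat 1}" using Z Z_ZG by blast
    show "\<exists>x. x ** g ** Jh x = g" if "g \<in> {mat 1}" for g
      using that by (intro exI[of _ "mat 1"]) (simp add: Jh_1)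
  qed (auto simp: matrix_mul_assoc matrix_add_ldistrib matrix_add_rdistrib Jh_add Jh_mult Jh_Jh Jh_1)
  thus "\<exists>M. herm_cone (**) Jh (mat 1) M \<and> mat 1 \<in> M" by blast
next
  assume "\<exists>M. herm_cone (**) Jh (mat 1) M \<and> mat 1 \<in> M"
  then obtain M where "herm_cone (**) Jh (mat 1) M" "{mat 1} \<subseteq> M" by blast
  from cone_imp_ZG[OF this] show "Z (**) Jh (mat 1)" using Z_ZG by blast
qed

lemma R4: "Z (**) (mstar s) A \<longleftrightarrow> (\<exists>M. herm_cone (**) (mstar s) (mat \<eta>) M \<and> A \<in> M)"
proof
  assume Z: "Z (**) (mstar s) A"
  have "herm_cone (**) (mstar s) (mat \<eta>) (gcone (**) (mstar s) {A}) \<and> {A} \<subseteq> gcone (**) (mstar s) {A}"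
  proof (rule ZG_imp_cone)
    show "ZG (**) (mstar s) {A}" using Z Z_ZG by blast
    show "\<exists>x. x ** g ** mstar s x = g" if "g \<in> {A}" for g
      using that by (intro exI[of _ "mat 1"]) (simp add: mstar_mat[OF inv] s_1[OF inv])
  qed (auto simp: matrix_mul_assoc matrix_add_ldistrib matrix_add_rdistrib mstar_add[OF inv]
        mstar_mult[OF inv] mat_comm[OF eta_F] A_herm A_herm')
  thus "\<exists>M. herm_cone (**) (mstar s) (mat \<eta>) M \<and> A \<in> M" by blast
next
  assume "\<exists>M. herm_cone (**) (mstar s) (mat \<eta>) M \<and> A \<in> M"
  then obtain M where "herm_cone (**) (mstar s) (mat \<eta>) M" "{A} \<subseteq> M" by blast
  from cone_imp_ZG[OF this] show "Z (**) (mstar s) A" using Z_ZG by blast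
qed

lemma R3: "Z (**) Jh (mat 1) \<longleftrightarrow> Z (**) (mstar s) A"
proof
  assume Z: "Z (**) Jh (mat 1)"
  show "Z (**) (mstar s) A" unfolding Z_def
  proof (intro allI impI ballI)
    fix xs x assume s0: "sum_list (map (\<lambda>x. x ** A ** mstar s x) xs) = 0" and x: "x \<in> set xs"
    have e: "x ** A ** Jh (x ** A) = mat (s \<eta>) ** (x ** A ** mstar s x) ** A" for x
    proof -
      have "x ** A ** Jh (x ** A) = x ** A ** Ai ** mstar s A ** mstar s x ** A"
        unfolding Jh_def by (simp add: mstar_mult[OF inv] matrix_mul_assoc)
      also have "\<dots> = x ** mat (s \<eta>) ** A ** mstar s x ** A" by (simp add: mstarA matrix_mul_assoc)
      also have "\<dots> = mat (s \<eta>) ** (x ** A ** mstar s x) ** A"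
        by (simp add: mat_comm[OF seta_F] matrix_mul_assoc)
      finally show ?thesis .
    qed
    have "sum_list (map (\<lambda>y. y ** mat 1 ** Jh y) (map (\<lambda>x. x ** A) xs))
        = mat (s \<eta>) ** sum_list (map (\<lambda>x. x ** A ** mstar s x) xs) ** A"
      by (simp add: comp_def e sum_list_mult_lr)
    hence "sum_list (map (\<lambda>y. y ** mat 1 ** Jh y) (map (\<lambda>x. x ** A) xs)) = 0" using s0 by simp
    moreover have "x ** A \<in> set (map (\<lambda>x. x ** A) xs)" using x by simp
    ultimately have "(x ** A) ** mat 1 ** Jh (x ** A) = 0" using Z unfolding Z_def by blast
    hence "x ** A ** Jh (x ** A) = 0" by simp
    hence "mat \<eta> ** (mat (s \<eta>) ** (x ** A ** mstar s x) ** A) ** Ai = 0" by (simp add: e)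
    thus "x ** A ** mstar s x = 0" by (simp add: matrix_mul_assoc mat_mat eta_unit)
  qed
next
  assume Z: "Z (**) (mstar s) A"
  show "Z (**) Jh (mat 1)" unfolding Z_def
  proof (intro allI impI ballI)
    fix xs x assume s0: "sum_list (map (\<lambda>x. x ** mat 1 ** Jh x) xs) = 0" and x: "x \<in> set xs"
    have e: "x ** mat 1 ** Jh x = mat (s \<eta>) ** ((x ** Ai) ** A ** mstar s (x ** Ai)) ** A" for x
    proof -
      have "(x ** Ai) ** A ** mstar s (x ** Ai) = x ** Ai ** A ** mstar s Ai ** mstar s x"
        by (simp add: mstar_mult[OF inv] matrix_mul_assoc)
      also have "\<dots> = x ** Ai ** mat \<eta> ** mstar s x" by (simp add: mstarAi matrix_mul_assoc)
      also have "\<dots> = mat \<eta> ** (x ** Ai ** mstar s x)"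
        by (simp only: mat_pull[OF eta_F] matrix_mul_assoc)
      finally have "mat (s \<eta>) ** ((x ** Ai) ** A ** mstar s (x ** Ai)) ** A = x ** Ai ** mstar s x ** A"
        by (simp add: matrix_mul_assoc mat_mat seta_unit)
      thus ?thesis unfolding Jh_def by (simp add: matrix_mul_assoc)
    qed
    have e': "(x ** Ai) ** A ** mstar s (x ** Ai) = mat \<eta> ** (x ** mat 1 ** Jh x) ** Ai" for x
    proof -
      have "mat \<eta> ** (x ** mat 1 ** Jh x) ** Ai
          = mat \<eta> ** (mat (s \<eta>) ** ((x ** Ai) ** A ** mstar s (x ** Ai)) ** A) ** Ai"
        by (simp only: e)
      also have "\<dots> = (x ** Ai) ** A ** mstar s (x ** Ai)"
        by (simp only: matrix_mul_assoc mat_mat eta_unit AAi2 matrix_mul_lid)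
      finally show ?thesis by simp
    qed
    have "sum_list (map (\<lambda>y. y ** A ** mstar s y) (map (\<lambda>x. x ** Ai) xs))
        = sum_list (map (\<lambda>x. mat \<eta> ** (x ** mat 1 ** Jh x) ** Ai) xs)"
      by (simp only: map_map comp_def e')
    also have "\<dots> = mat \<eta> ** sum_list (map (\<lambda>x. x ** mat 1 ** Jh x) xs) ** Ai"
      by (simp only: sum_list_mult_lr)
    finally have "sum_list (map (\<lambda>y. y ** A ** mstar s y) (map (\<lambda>x. x ** Ai) xs))
        = mat \<eta> ** sum_list (map (\<lambda>x. x ** mat 1 ** Jh x) xs) ** Ai" .
    hence "sum_list (map (\<lambda>y. y ** A ** mstar s y) (map (\<lambda>x. x ** Ai) xs)) = 0" using s0 by simp
    moreover have "x ** Ai \<in> set (map (\<lambda>x. x ** Ai) xs)" using x by simp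
    ultimately have Y0: "(x ** Ai) ** A ** mstar s (x ** Ai) = 0" using Z unfolding Z_def by blast
    thus "x ** mat 1 ** Jh x = 0" by (subst e) (simp only: Y0 times0_right times0_left)
  qed
qed

end


(* ---- A4 ---- *)


definition rowadd :: "'n::finite \<Rightarrow> 'd::ring_1^'n \<Rightarrow> 'd^'n^'n" where
  "rowadd i r = (\<chi> a b. (if a = b then 1 else 0) + (if a = i then r $ b else 0))"

lemma rowadd_entry: "rowadd i r $ a $ b = (if a = b then 1 else 0) + (if a = i then r $ b else 0)"
  by (simp add: rowadd_def)

lemma ifs: "(x::'a::semiring_1) * (if P then y else 0) = (if P then x * y else 0)"
  "(if P then y else 0) * (x::'a::semiring_1) = (if P then y * x else 0)"
  by auto

lemma mult_rowadd_entry: "(X ** rowadd i r) $ a $ b = X $ a $ b + X $ a $ i * r $ b"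
  by (simp add: matrix_matrix_mult_def rowadd_entry distrib_left sum.distrib ifs sum.delta sum.delta')

lemma rowadd_mult_entry: "(rowadd i r ** X) $ a $ b = X $ a $ b + (if a = i then (\<Sum>k\<in>UNIV. r $ k * X $ k $ b) else 0)"
  by (simp add: matrix_matrix_mult_def rowadd_entry distrib_right sum.distrib ifs sum.delta sum.delta' flip: sum_distrib_left)

lemma rowadd_mult: assumes "r $ i = 0" shows "rowadd i r ** rowadd i r' = rowadd i (r + r')"
proof -
  have "(\<Sum>k\<in>UNIV. r $ k * rowadd i r' $ k $ b) = r $ b" for b
    using assms by (simp add: rowadd_entry distrib_left sum.distrib ifs sum.delta sum.delta')
  thus ?thesis
    by (simp add: vec_eq_iff rowadd_mult_entry) (simp add: rowadd_entry)
qed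

lemma rowadd_0: "rowadd i 0 = mat 1"
  by (simp add: vec_eq_iff rowadd_entry mat_def)

lemma rowadd_invertible: assumes "r $ i = 0" shows "invertible (rowadd i r)"
  unfolding invertible_def
proof (intro exI conjI)
  show "rowadd i r ** rowadd i (- r) = mat 1" using rowadd_mult[OF assms] by (simp add: rowadd_0)
  have "(- r) $ i = 0" using assms by simp
  show "rowadd i (- r) ** rowadd i r = mat 1" using rowadd_mult[OF \<open>(- r) $ i = 0\<close>] by (simp add: rowadd_0)
qed

lemma invertible_mult': "invertible (X::'a::semiring_1^'n::finite^'n) \<Longrightarrow> invertible Y \<Longrightarrow> invertible (X ** Y)"
  unfolding invertible_def
proof (elim exE conjE)
  fix X' Y' assume "X ** X' = mat 1" "X' ** X = mat 1" "Y ** Y' = mat 1" "Y' ** Y = mat 1"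
  hence "X ** Y ** (Y' ** X') = mat 1 \<and> Y' ** X' ** (X ** Y) = mat 1"
    by (metis matrix_mul_assoc matrix_mul_rid)
  thus "\<exists>A'. X ** Y ** A' = mat 1 \<and> A' ** (X ** Y) = mat 1" by blast
qed

context
  fixes s :: "'d::division_ring \<Rightarrow> 'd"
  assumes inv: "is_involution s"
begin

lemmas [simp] = mstar_entry[OF inv] mstar_mstar[OF inv] s_s[OF inv] s_0[OF inv] s_1[OF inv] s_eq0[OF inv]

lemma mstar_rowadd_mult_entry:
  "(mstar s (rowadd i r) ** B) $ a $ l = B $ a $ l + s (r $ a) * B $ i $ l"
proof -
  have e: "s (rowadd i r $ k $ a) = (if k = a then 1 else 0) + (if k = i then s (r $ a) else 0)" for k
    by (simp add: rowadd_entry s_add[OF inv])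
  show ?thesis
    by (simp add: matrix_matrix_mult_def e distrib_right sum.distrib ifs sum.delta sum.delta')
qed

lemma cong_entry:
  "(mstar s (rowadd i r) ** B ** rowadd i r) $ a $ b
     = B $ a $ b + s (r $ a) * B $ i $ b + (B $ a $ i + s (r $ a) * B $ i $ i) * r $ b"
  by (simp add: mult_rowadd_entry mstar_rowadd_mult_entry)

lemma mstar_invertible: "invertible P \<Longrightarrow> invertible (mstar s P)"
  unfolding invertible_def
proof (elim exE conjE)
  fix P' assume "P ** P' = mat 1" "P' ** P = mat 1"
  hence "mstar s P ** mstar s P' = mat 1 \<and> mstar s P' ** mstar s P = mat 1"
    by (metis mstar_mult[OF inv] mstar_mat[OF inv] s_1[OF inv])
  thus "\<exists>A'. mstar s P ** A' = mat 1 \<and> A' ** mstar s P = mat 1" by blast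
qed

end



(* ---- A5 ---- *)


context
  fixes s :: "'d::division_ring \<Rightarrow> 'd" and \<eta> :: 'd
  assumes inv: "is_involution s"
    and eta_F: "\<eta> \<in> center"
    and cond: "\<eta> \<noteq> -1 \<or> s \<noteq> id"
begin

lemmas [simp] = mstar_entry[OF inv] mstar_mstar[OF inv] s_s[OF inv] s_0[OF inv] s_1[OF inv] s_eq0[OF inv]

lemma exists_lambda: assumes c: "c \<noteq> 0" shows "\<exists>l. s l * (\<eta> * s c) + c * l \<noteq> 0"
proof (rule ccontr)
  assume "\<not> ?thesis"
  hence H: "\<And>l. s l * (\<eta> * s c) + c * l = 0" by blast
  have ec: "\<eta> * s c = - c" using H[of 1] by (simp add: eq_neg_iff_add_eq_0)
  have sl: "s l = c * l * inverse c" for l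
  proof -
    have "- (s l * c) + c * l = 0" using H[of l] by (simp add: ec)
    hence "c * l = s l * c" by (simp add: add_eq_0_iff2 eq_neg_iff_add_eq_0)
    hence "c * l * inverse c = s l * (c * inverse c)" by (simp add: mult.assoc)
    thus ?thesis using c by simp
  qed
  have comm0: "s x * s y = s y * s x" for x y
  proof -
    have "c * x * inverse c * (c * y * inverse c) = c * x * (inverse c * c) * y * inverse c"
      by (simp only: mult.assoc)
    also have "\<dots> = c * (x * y) * inverse c" using c by (simp add: mult.assoc)
    finally have "s (x * y) = c * x * inverse c * (c * y * inverse c)" by (simp add: sl)
    also have "\<dots> = s x * s y" by (simp add: sl)
    finally show ?thesis by (simp add: s_mult[OF inv])
  qed
  have comm: "x * y = y * x" for x y :: 'd
    using comm0[of "s x" "s y"] by simp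
  have sid: "s = id"
  proof
    fix l show "s l = id l" using c by (simp add: sl comm[of c l] mult.assoc)
  qed
  have "\<eta> * c = - c" using ec sid by simp
  hence "(\<eta> + 1) * c = 0" by (simp add: distrib_right)
  hence "\<eta> = -1" using c by (simp add: eq_neg_iff_add_eq_0)
  thus False using cond sid by simp
qed

definition hermp :: "'d^'n::finite^'n \<Rightarrow> bool" where "hermp B \<longleftrightarrow> mat \<eta> ** mstar s B = B"
definition Sprop :: "'n::finite set \<Rightarrow> 'd^'n^'n \<Rightarrow> bool" where
  "Sprop S B \<longleftrightarrow> (\<forall>a\<in>S. \<forall>b. b \<noteq> a \<longrightarrow> B $ a $ b = 0)"

lemma herm_entry: "hermp B \<Longrightarrow> B $ a $ b = \<eta> * s (B $ b $ a)"
  unfolding hermp_def by (metis mat_mult_entry mstar_entry[OF inv])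

lemma herm_cong: assumes "hermp B" shows "hermp (mstar s P ** B ** P)"
proof -
  have "mat \<eta> ** mstar s (mstar s P ** B ** P) = mat \<eta> ** mstar s P ** mstar s B ** P"
    by (simp add: mstar_mult[OF inv] matrix_mul_assoc)
  also have "\<dots> = mstar s P ** (mat \<eta> ** mstar s B) ** P"
    by (simp only: mat_pull[OF eta_F, symmetric] matrix_mul_assoc)
  also have "\<dots> = mstar s P ** B ** P" using assms unfolding hermp_def by simp
  finally show ?thesis unfolding hermp_def .
qed

lemma Sprop_col: "hermp B \<Longrightarrow> Sprop S B \<Longrightarrow> a \<in> S \<Longrightarrow> b \<noteq> a \<Longrightarrow> B $ b $ a = 0"
  unfolding Sprop_def by (metis herm_entry s_0[OF inv] mult_zero_right)

lemma clear_step: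
  fixes B :: "'d^'n::finite^'n"
  assumes H: "hermp B" and S: "Sprop S B" and i: "i \<notin> S" and nz: "B $ i $ i \<noteq> 0"
  shows "\<exists>Q. invertible Q \<and> Sprop (insert i S) (mstar s Q ** B ** Q)"
proof -
  define r :: "'d^'n" where "r = (\<chi> b. if b \<noteq> i \<and> b \<notin> S then - (inverse (B $ i $ i) * B $ i $ b) else 0)"
  have ri: "r $ i = 0" by (simp add: r_def)
  have rS: "a \<in> S \<Longrightarrow> r $ a = 0" for a by (simp add: r_def)
  show ?thesis
  proof (intro exI conjI)
    show "invertible (rowadd i r)" by (rule rowadd_invertible[OF ri])
    show "Sprop (insert i S) (mstar s (rowadd i r) ** B ** rowadd i r)"
      unfolding Sprop_def
    proof (intro ballI allI impI)
      fix a b assume a: "a \<in> insert i S" and ba: "b \<noteq> a"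
      show "(mstar s (rowadd i r) ** B ** rowadd i r) $ a $ b = 0"
      proof (cases "a = i")
        case True
        show ?thesis
        proof (cases "b \<in> S")
          case True
          have "B $ i $ b = 0" using Sprop_col[OF H S True] ba \<open>a = i\<close> by simp
          thus ?thesis using \<open>a = i\<close> True by (simp add: cong_entry[OF inv] ri rS)
        next
          case False
          have "B $ i $ i * (inverse (B $ i $ i) * B $ i $ b) = B $ i $ b"
            using nz by (simp add: mult.assoc[symmetric])
          thus ?thesis using \<open>a = i\<close> False ba by (simp add: cong_entry[OF inv] ri r_def)
        qed
      next
        case False
        hence aS: "a \<in> S" using a by simp
        have "B $ a $ b = 0" "B $ a $ i = 0" using S aS ba False unfolding Sprop_def by auto
        thus ?thesis by (simp add: cong_entry[OF inv] rS[OF aS])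
      qed
    qed
  qed
qed

lemma trans_step:
  fixes B :: "'d^'n::finite^'n"
  assumes H: "hermp B" and S: "Sprop S B" and p: "p \<notin> S" and q: "q \<notin> S" and pq: "p \<noteq> q"
    and nz: "B $ p $ q \<noteq> 0" and pp: "B $ p $ p = 0" and qq: "B $ q $ q = 0"
  shows "\<exists>Q. invertible Q \<and> Sprop S (mstar s Q ** B ** Q) \<and> (mstar s Q ** B ** Q) $ p $ p \<noteq> 0"
proof -
  obtain l where l: "s l * (\<eta> * s (B $ p $ q)) + B $ p $ q * l \<noteq> 0" using exists_lambda[OF nz] by blast
  define r :: "'d^'n" where "r = (\<chi> b. if b = p then l else 0)"
  have rq: "r $ q = 0" using pq by (simp add: r_def)
  have rS: "a \<in> S \<Longrightarrow> r $ a = 0" for a using p by (auto simp: r_def)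
  show ?thesis
  proof (intro exI conjI)
    show "invertible (rowadd q r)" by (rule rowadd_invertible[OF rq])
    show "Sprop S (mstar s (rowadd q r) ** B ** rowadd q r)"
      unfolding Sprop_def
    proof (intro ballI allI impI)
      fix a b assume aS: "a \<in> S" and ba: "b \<noteq> a"
      have "B $ a $ b = 0" "B $ a $ q = 0" using S aS ba q unfolding Sprop_def by auto
      thus "(mstar s (rowadd q r) ** B ** rowadd q r) $ a $ b = 0"
        by (simp add: cong_entry[OF inv] rS[OF aS])
    qed
    have "B $ q $ p = \<eta> * s (B $ p $ q)" using herm_entry[OF H] .
    thus "(mstar s (rowadd q r) ** B ** rowadd q r) $ p $ p \<noteq> 0"
      using l by (simp add: cong_entry[OF inv] r_def pp qq)
  qed
qed

end


(* ---- A6 ---- *)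


context
  fixes s :: "'d::division_ring \<Rightarrow> 'd" and \<eta> :: 'd
  assumes inv: "is_involution s"
    and eta_F: "\<eta> \<in> center"
    and cond: "\<eta> \<noteq> -1 \<or> s \<noteq> id"
begin

lemmas [simp] = mstar_entry[OF inv] mstar_mstar[OF inv] s_s[OF inv] s_0[OF inv] s_1[OF inv] s_eq0[OF inv]

lemmas Sprop_def' = Sprop_def[OF inv eta_F cond] and hermp_def' = hermp_def[OF inv eta_F cond]

lemma cong_comp: "mstar s (Q1 ** Q2) ** B ** (Q1 ** Q2) = mstar s Q2 ** (mstar s Q1 ** B ** Q1) ** Q2"
  by (simp add: mstar_mult[OF inv] matrix_mul_assoc)

lemma nondiag_step:
  fixes B :: "'d^'n::finite^'n"
  assumes H: "hermp s \<eta> B" and S: "Sprop S B" and p: "p \<noteq> q" "B $ p $ q \<noteq> 0"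
  shows "\<exists>Q i. invertible Q \<and> i \<notin> S \<and> Sprop (insert i S) (mstar s Q ** B ** Q)"
proof -
  have pS: "p \<notin> S" using S p by (auto simp: Sprop_def')
  have qS: "q \<notin> S" using Sprop_col[OF inv eta_F cond H S] p by metis
  show ?thesis
  proof (cases "B $ p $ p \<noteq> 0")
    case True
    thus ?thesis using clear_step[OF inv eta_F cond H S pS] pS by blast
  next
    case F1: False
    show ?thesis
    proof (cases "B $ q $ q \<noteq> 0")
      case True
      thus ?thesis using clear_step[OF inv eta_F cond H S qS] qS by blast
    next
      case False
      obtain Q1 where Q1: "invertible Q1" "Sprop S (mstar s Q1 ** B ** Q1)"
          "(mstar s Q1 ** B ** Q1) $ p $ p \<noteq> 0"
        using trans_step[OF inv eta_F cond H S pS qS p(1) p(2)] F1 False by blast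
      have H1: "hermp s \<eta> (mstar s Q1 ** B ** Q1)" using herm_cong[OF inv eta_F cond H] .
      obtain Q2 where Q2: "invertible Q2" "Sprop (insert p S) (mstar s Q2 ** (mstar s Q1 ** B ** Q1) ** Q2)"
        using clear_step[OF inv eta_F cond H1 Q1(2) pS Q1(3)] by blast
      show ?thesis
        using invertible_mult'[OF Q1(1) Q2(1)] Q2(2) pS unfolding cong_comp[symmetric] by blast
    qed
  qed
qed

lemma diag_ind:
  "\<forall>(B::'d^'n::finite^'n) S. card (- S) \<le> m \<longrightarrow> hermp s \<eta> B \<longrightarrow> Sprop S B \<longrightarrow>
     (\<exists>P d. invertible P \<and> mstar s P ** B ** P = diag_mat d)"
proof (induction m)
  case 0
  show ?case
  proof (intro allI impI)
    fix B :: "'d^'n^'n" and S assume c: "card (- S) \<le> 0" and H: "hermp s \<eta> B" and S: "Sprop S B"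
    have "S = UNIV" using c by auto
    hence "B = diag_mat (\<lambda>i. B $ i $ i)" using S by (auto simp: vec_eq_iff diag_mat_def Sprop_def')
    hence "mstar s (mat 1) ** B ** mat 1 = diag_mat (\<lambda>i. B $ i $ i)" by (simp add: mstar_mat[OF inv])
    moreover have "invertible (mat 1 :: 'd^'n^'n)" unfolding invertible_def by auto
    ultimately show "\<exists>P d. invertible P \<and> mstar s P ** B ** P = diag_mat d" by blast
  qed
next
  case (Suc m)
  show ?case
  proof (intro allI impI)
    fix B :: "'d^'n^'n" and S assume c: "card (- S) \<le> Suc m" and H: "hermp s \<eta> B" and S: "Sprop S B"
    show "\<exists>P d. invertible P \<and> mstar s P ** B ** P = diag_mat d"
    proof (cases "\<exists>p q. p \<noteq> q \<and> B $ p $ q \<noteq> 0")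
      case False
      hence "B = diag_mat (\<lambda>i. B $ i $ i)" by (auto simp: vec_eq_iff diag_mat_def)
      hence "mstar s (mat 1) ** B ** mat 1 = diag_mat (\<lambda>i. B $ i $ i)" by (simp add: mstar_mat[OF inv])
      moreover have "invertible (mat 1 :: 'd^'n^'n)" unfolding invertible_def by auto
      ultimately show ?thesis by blast
    next
      case True
      then obtain p q where pq: "p \<noteq> q" "B $ p $ q \<noteq> 0" by blast
      obtain Q i where Q: "invertible Q" "i \<notin> S" "Sprop (insert i S) (mstar s Q ** B ** Q)"
        using nondiag_step[OF H S pq] by blast
      have "- insert i S = (- S) - {i}" by auto
      hence "card (- insert i S) = card (- S) - 1" using Q(2) by simp
      hence "card (- insert i S) \<le> m" using c by simp
      moreover have "hermp s \<eta> (mstar s Q ** B ** Q)" using herm_cong[OF inv eta_F cond H] .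
      ultimately obtain P d where P: "invertible P" "mstar s P ** (mstar s Q ** B ** Q) ** P = diag_mat d"
        using Suc.IH Q(3) by blast
      show ?thesis
        using invertible_mult'[OF Q(1) P(1)] P(2) unfolding cong_comp[symmetric] by blast
    qed
  qed
qed

lemma diag_exists:
  fixes B :: "'d^'n::finite^'n"
  assumes "mat \<eta> ** mstar s B = B"
  shows "\<exists>P d. invertible P \<and> mstar s P ** B ** P = diag_mat d"
  using diag_ind[of "card (UNIV::'n set)", rule_format, of "{}" B] assms by (simp add: hermp_def' Sprop_def')

end


(* ---- A7 ---- *)


definition single :: "'n::finite \<Rightarrow> 'n \<Rightarrow> 'd::ring_1 \<Rightarrow> 'd^'n^'n" where
  "single i j z = (\<chi> a b. if a = i \<and> b = j then z else 0)"

lemma single_add: "single i j x + single i j y = single i j (x + y)"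
  by (simp add: vec_eq_iff single_def)

lemma single_sum_list: "sum_list (map (\<lambda>p. single i j (f p)) ps) = single i j (sum_list (map f ps))"
  by (induction ps) (auto simp: single_add, simp add: vec_eq_iff single_def)

lemma single_eq0: "single i j z = 0 \<longleftrightarrow> z = 0"
  by (auto simp: vec_eq_iff single_def)

lemma diag_invertible_nz: assumes "invertible (diag_mat d :: 'd::ring_1^'n::finite^'n)" shows "d j \<noteq> 0"
proof
  assume d0: "d j = 0"
  obtain B where "diag_mat d ** B = mat 1" using assms unfolding invertible_def by blast
  hence "(diag_mat d ** B) $ j $ j = 1" by (simp add: mat_def)
  moreover have "(diag_mat d ** B) $ j $ j = 0"
    by (simp add: matrix_matrix_mult_def diag_mat_def d0 ifs sum.delta sum.delta')
  ultimately show False by simp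
qed

context setting
begin

lemmas [simp] = mstar_entry[OF inv]

lemma quad_entry: "(x ** B ** mstar s y) $ a $ b = (\<Sum>l\<in>UNIV. (\<Sum>k\<in>UNIV. x $ a $ k * B $ k $ l) * s (y $ b $ l))"
  by (simp add: matrix_matrix_mult_def)

lemma diag_quad_entry: "(x ** diag_mat d ** mstar s y) $ a $ b = (\<Sum>l\<in>UNIV. x $ a $ l * d l * s (y $ b $ l))"
  by (simp add: quad_entry diag_mat_def ifs sum.delta sum.delta')

lemma single_diag: "single i j z ** diag_mat d ** mstar s (single i j z) = single i i (z * d j * s z)"
proof -
  have e: "single i j z $ a $ l * d l * s (single i j z $ b $ l) =
     (if l = j then (if a = i then z else 0) * d j * s (if b = i then z else 0) else 0)" for a b l
    by (simp add: single_def)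
  show ?thesis
    by (simp add: vec_eq_iff diag_quad_entry e) (simp add: single_def)
qed

lemma Z_diag_cone:
  fixes d :: "'n \<Rightarrow> 'd"
  assumes Z: "Z (**) (mstar s) (diag_mat d)" and herm: "\<And>j. \<eta> * s (d j) = d j"
  shows "\<exists>M. herm_cone (*) s \<eta> M \<and> (\<forall>i. d i \<in> M)"
proof -
  have "herm_cone (*) s \<eta> (gcone (*) s (range d)) \<and> range d \<subseteq> gcone (*) s (range d)"
  proof (rule ZG_imp_cone)
    show "\<eta> * a = a * \<eta>" for a using eta_F by (simp add: center_def)
    show "\<eta> * s g = g" if "g \<in> range d" for g using that herm by auto
    show "\<exists>x. x * g * s x = g" if "g \<in> range d" for g by (intro exI[of _ 1]) simp
    show "ZG (*) s (range d)"
      unfolding ZG_def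
    proof (intro allI impI)
      fix ps :: "('d \<times> 'd) list" assume ps: "set ps \<subseteq> range d \<times> UNIV"
        and s0: "sum_list (map (\<lambda>(g, x). x * g * s x) ps) = 0"
      define i0 :: 'n where "i0 = undefined"
      define jj where "jj g = (SOME j. d j = g)" for g
      have jj: "d (jj g) = g" if g: "g \<in> range d" for g
      proof -
        obtain j where "d j = g" using g by auto
        thus ?thesis unfolding jj_def by (rule someI)
      qed
      define X where "X p = single i0 (jj (fst p)) (snd p)" for p :: "'d \<times> 'd"
      have eX: "p \<in> set ps \<Longrightarrow> X p ** diag_mat d ** mstar s (X p) = single i0 i0 ((\<lambda>(g, x). x * g * s x) p)" for p
        using ps by (auto simp: X_def single_diag jj)
      have "sum_list (map (\<lambda>x. x ** diag_mat d ** mstar s x) (map X ps))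
          = sum_list (map (\<lambda>p. single i0 i0 ((\<lambda>(g, x). x * g * s x) p)) ps)"
        using eX by (simp add: comp_def cong: map_cong)
      also have "\<dots> = 0" by (simp only: single_sum_list s0) (simp add: single_def vec_eq_iff)
      finally have "sum_list (map (\<lambda>x. x ** diag_mat d ** mstar s x) (map X ps)) = 0" .
      hence all0: "\<forall>x\<in>set (map X ps). x ** diag_mat d ** mstar s x = 0" using Z unfolding Z_def by blast
      show "\<forall>(g, x)\<in>set ps. x * g * s x = 0"
      proof (intro ballI, clarify)
        fix g x assume gx: "(g, x) \<in> set ps"
        have "X (g,x) ** diag_mat d ** mstar s (X (g,x)) = 0" using all0 gx by auto
        hence "single i0 i0 (x * g * s x) = 0" using eX[OF gx] by simp
        thus "x * g * s x = 0" by (simp add: single_eq0)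
      qed
    qed
    qed (auto simp: algebra_simps s_add[OF inv] s_mult[OF inv])
  thus ?thesis by blast
qed

end


(* ---- A8 ---- *)


context setting
begin

lemmas [simp] = mstar_mstar[OF inv] s_s[OF inv] s_0[OF inv] s_1[OF inv] s_eq0[OF inv]

lemma R5a:
  assumes cond: "\<eta> \<noteq> -1 \<or> s \<noteq> id" and Z: "Z (**) (mstar s) A"
  shows "\<exists>P d. invertible P \<and> mstar s P ** A ** P = diag_mat d \<and> (\<exists>M. herm_cone (*) s \<eta> M \<and> (\<forall>i. d i \<in> M))"
proof -
  obtain P d where P: "invertible P" "mstar s P ** A ** P = diag_mat d"
    using diag_exists[OF inv eta_F cond A_herm] by blast
  have "Z (**) (mstar s) (mstar s P ** A ** mstar s (mstar s P))"
    by (rule Z_congr[OF _ _ Z]) (simp_all add: matrix_mul_assoc mstar_mult[OF inv])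
  hence Zd: "Z (**) (mstar s) (diag_mat d)" using P(2) by simp
  have H: "hermp s \<eta> (mstar s P ** A ** P)"
    using herm_cong[OF inv eta_F cond, of A P] A_herm by (simp add: hermp_def[OF inv eta_F cond])
  have "\<eta> * s (d j) = d j" for j
    using herm_entry[OF inv eta_F cond H, of j j] P(2) by (simp add: diag_mat_def)
  from Z_diag_cone[OF Zd this] P show ?thesis by blast
qed

lemma R5b:
  assumes P: "invertible P" "mstar s P ** A ** P = diag_mat d"
    and M: "herm_cone (*) s \<eta> M" "\<forall>i. d i \<in> M"
  shows "Z (**) (mstar s) A"
proof -
  have "invertible (diag_mat d)"
    using P invertible_mult'[OF invertible_mult'[OF mstar_invertible[OF inv P(1)] A_inv] P(1)] by simp
  hence dnz: "d j \<noteq> 0" for j using diag_invertible_nz by blast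
  have conj: "\<forall>a. \<forall>m\<in>M. a * m * s a \<in> M" using M(1) unfolding herm_cone_def by simp
  have Zd: "Z (**) (mstar s) (diag_mat d)"
    unfolding Z_def
  proof (intro allI impI ballI)
    fix xs x assume s0: "sum_list (map (\<lambda>x. x ** diag_mat d ** mstar s x) xs) = 0" and x: "x \<in> set xs"
    have x0: "y $ a $ l = 0" if y: "y \<in> set xs" for y a l
    proof -
      have "sum_list (map (\<lambda>x. x ** diag_mat d ** mstar s x) xs) $ a $ a = 0" using s0 by simp
      hence "sum_list (map (\<lambda>x. (\<Sum>l\<in>UNIV. x $ a $ l * d l * s (x $ a $ l))) xs) = 0"
        by (simp add: sum_list_entry diag_quad_entry comp_def)
      moreover have "set (map (\<lambda>x. (\<Sum>l\<in>UNIV. x $ a $ l * d l * s (x $ a $ l))) xs) \<subseteq> M"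
      proof
        fix t assume "t \<in> set (map (\<lambda>x. (\<Sum>l\<in>UNIV. x $ a $ l * d l * s (x $ a $ l))) xs)"
        then obtain z where t: "t = (\<Sum>l\<in>UNIV. z $ a $ l * d l * s (z $ a $ l))" by auto
        have "\<forall>l\<in>UNIV. z $ a $ l * d l * s (z $ a $ l) \<in> M" using conj M(2) by blast
        thus "t \<in> M" unfolding t by (rule cone_sum_mem[OF M(1), rotated]) simp
      qed
      ultimately have "\<forall>t\<in>set (map (\<lambda>x. (\<Sum>l\<in>UNIV. x $ a $ l * d l * s (x $ a $ l))) xs). t = 0"
        using cone_list_zero[OF M(1)] by blast
      hence sum0: "(\<Sum>l\<in>UNIV. y $ a $ l * d l * s (y $ a $ l)) = 0" using y by auto
      have mem: "\<forall>l\<in>UNIV. y $ a $ l * d l * s (y $ a $ l) \<in> M" using conj M(2) by blast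
      have "\<forall>l\<in>UNIV. y $ a $ l * d l * s (y $ a $ l) = 0"
        by (rule cone_sum_zero[OF M(1) finite mem sum0])
      hence "y $ a $ l * d l * s (y $ a $ l) = 0" by simp
      thus ?thesis using dnz[of l] by simp
    qed
    have "x = 0" using x0[OF x] by (simp add: vec_eq_iff)
    thus "x ** diag_mat d ** mstar s x = 0" by simp
  qed
  define Pi where "Pi = matrix_inv P"
  have PPi: "P ** Pi = mat 1"
  proof -
    obtain B where "P ** B = mat 1 \<and> B ** P = mat 1" using P(1) unfolding invertible_def by blast
    hence "P ** Pi = mat 1 \<and> Pi ** P = mat 1" unfolding Pi_def matrix_inv_def by (rule someI)
    thus ?thesis by simp
  qed
  have "Z (**) (mstar s) (mstar s Pi ** diag_mat d ** mstar s (mstar s Pi))"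
    by (rule Z_congr[OF _ _ Zd]) (simp_all add: matrix_mul_assoc mstar_mult[OF inv])
  moreover have "mstar s Pi ** diag_mat d ** mstar s (mstar s Pi) = A"
  proof -
    have "mstar s Pi ** diag_mat d ** mstar s (mstar s Pi) = mstar s Pi ** (mstar s P ** A ** P) ** Pi"
      using P(2) by simp
    also have "\<dots> = mstar s (P ** Pi) ** A ** (P ** Pi)"
      by (simp add: matrix_mul_assoc mstar_mult[OF inv])
    also have "\<dots> = A" by (simp add: PPi mstar_mat[OF inv])
    finally show ?thesis .
  qed
  ultimately show ?thesis by simp
qed

end


(* ---- A9 ---- *)


definition sel :: "('n::finite \<Rightarrow> bool) \<Rightarrow> ('n \<Rightarrow> 'n) \<Rightarrow> 'd::ring_1^'n^'n" where
  "sel P f = (\<chi> a k. if P a \<and> k = f a then 1 else 0)"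

context setting
begin

lemmas [simp] = mstar_entry[OF inv]

lemma sel_quad: "(sel P f ** B ** mstar s (sel P f)) $ a $ b = (if P a \<and> P b then B $ (f a) $ (f b) else 0)"
proof -
  have e1: "(sel P f ** B) $ a $ l = (if P a then B $ (f a) $ l else 0)" for a l
    by (simp add: matrix_matrix_mult_def sel_def ifs sum.delta sum.delta')
  have e3: "(sel P f ** B) $ a $ k * s (sel P f $ b $ k) = (if k = f b then (if P a \<and> P b then B $ f a $ f b else 0) else 0)" for k
    unfolding e1 by (simp add: sel_def)
  show ?thesis
    by (simp add: matrix_matrix_mult_def[of "sel P f ** B"] e3 sum.delta')
qed

lemma R6: assumes char: "(2::'d) \<noteq> 0" and e: "\<eta> = -1" and sid: "s = id"
  shows "\<not> Z (**) (mstar s) A"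
proof
  assume Z: "Z (**) (mstar s) A"
  have skew: "A $ a $ b = - A $ b $ a" for a b
  proof -
    have "(mat \<eta> ** mstar s A) $ a $ b = A $ a $ b" using A_herm by simp
    thus ?thesis using e sid by (simp add: mat_mult_entry mstar_def)
  qed
  have diag0: "A $ a $ a = 0" for a
  proof -
    have "A $ a $ a + A $ a $ a = 0" using skew[of a a] by (simp add: eq_neg_iff_add_eq_0)
    hence "2 * A $ a $ a = 0" by (simp add: mult_2)
    thus ?thesis using char by simp
  qed
  have "\<exists>i j. A $ i $ j \<noteq> 0"
  proof (rule ccontr)
    assume "\<not> ?thesis"
    hence "A = 0" by (simp add: vec_eq_iff)
    hence "(mat 1 :: 'd^'n^'n) = 0" using AAi by simp
    hence "(mat 1 :: 'd^'n^'n) $ undefined $ undefined = 0" by simp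
    thus False by (simp add: mat_def)
  qed
  then obtain i j where ij: "A $ i $ j \<noteq> 0" by blast
  hence inej: "i \<noteq> j" using diag0 by auto
  define P where "P a = (a = i \<or> a = j)" for a
  define sg where "sg a = (if a = i then j else i)" for a
  define x1 :: "'d^'n^'n" where "x1 = sel P id"
  define x2 :: "'d^'n^'n" where "x2 = sel P sg"
  have sum0: "x1 ** A ** mstar s x1 + x2 ** A ** mstar s x2 = 0"
  proof (simp add: vec_eq_iff, intro allI)
    fix a b
    have sk: "A $ i $ j + A $ j $ i = 0" using skew[of i j] by (simp add: eq_neg_iff_add_eq_0)
    have sk': "A $ j $ i + A $ i $ j = 0" using sk by (simp add: add.commute)
    have sgi: "sg i = j" and sgj: "sg j = i" using inej by (auto simp: sg_def)
    have "(if P a \<and> P b then A $ a $ b else 0) + (if P a \<and> P b then A $ (sg a) $ (sg b) else 0) = 0"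
    proof (cases "P a \<and> P b")
      case True
      hence "a = i \<or> a = j" "b = i \<or> b = j" by (auto simp: P_def)
      thus ?thesis using True sk sk' sgi sgj diag0[of i] diag0[of j] by (elim disjE) simp_all
    next
      case False
      show ?thesis by (simp only: if_not_P[OF False] add_0)
    qed
    thus "(x1 ** A ** mstar s x1) $ a $ b + (x2 ** A ** mstar s x2) $ a $ b = 0"
      unfolding x1_def x2_def sel_quad id_apply .
  qed
  hence s2: "sum_list (map (\<lambda>x. x ** A ** mstar s x) [x1, x2]) = 0" by (simp only: list.map sum_list.Cons sum_list.Nil add_0_right)
  have "x1 \<in> set [x1, x2]" by simp
  from Z[unfolded Z_def, rule_format, OF s2 this] have x10: "x1 ** A ** mstar s x1 = 0" .
  have "(x1 ** A ** mstar s x1) $ i $ j = (0::'d^'n^'n) $ i $ j" by (simp only: x10)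
  hence "(x1 ** A ** mstar s x1) $ i $ j = 0" by (simp only: zero_index)
  thus False unfolding x1_def sel_quad using ij by (simp add: P_def)
qed

end


theorem corollary1p4:
  fixes s :: "'d::division_ring \<Rightarrow> 'd"
    and \<eta> :: 'd
    and A :: "'d^'n::finite^'n"
  assumes char: "(2::'d) \<noteq> 0"
    and fd: "fin_dim_over_center TYPE('d)"
    and inv: "is_involution s"
    and eta_F: "\<eta> \<in> center"
    and eta_unit: "\<eta> * s \<eta> = 1"
    and A_inv: "invertible A"
    and A_herm: "mat \<eta> ** mstar s A = A"
  shows "((\<eta> \<noteq> -1 \<or> s \<noteq> id) \<longrightarrow>
          ((formally_real (**) (\<lambda>X. matrix_inv A ** mstar s X ** A)
             \<longleftrightarrow> (\<exists>M. herm_cone (**) (\<lambda>X. matrix_inv A ** mstar s X ** A) (mat 1) M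
                        \<and> mat 1 \<in> M))
         \<and> (formally_real (**) (\<lambda>X. matrix_inv A ** mstar s X ** A)
             \<longleftrightarrow> (\<exists>M. herm_cone (**) (mstar s) (mat \<eta>) M \<and> A \<in> M))
         \<and> (formally_real (**) (\<lambda>X. matrix_inv A ** mstar s X ** A)
             \<longleftrightarrow> (\<exists>P d. invertible P \<and> mstar s P ** A ** P = diag_mat d
                   \<and> (\<exists>M. herm_cone (*) s \<eta> M \<and> (\<forall>i. d i \<in> M))))))
       \<and> ((\<eta> = -1 \<and> s = id) \<longrightarrow>
          \<not> formally_real (**) (\<lambda>X. matrix_inv A ** mstar s X ** A))"
  proof -
  interpret setting s \<eta> A using inv eta_F eta_unit A_inv A_herm by unfold_locales
  have J: "(\<lambda>X. matrix_inv A ** mstar s X ** A) = Jh" by (rule ext) (simp add: Jh_def Ai_def)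
  show ?thesis
    unfolding J
  proof (intro conjI impI)
    assume c: "\<eta> \<noteq> -1 \<or> s \<noteq> id"
    show "formally_real (**) Jh = (\<exists>M. herm_cone (**) Jh (mat 1) M \<and> mat 1 \<in> M)"
      using R1 R2 by simp
    show "formally_real (**) Jh = (\<exists>M. herm_cone (**) (mstar s) (mat \<eta>) M \<and> A \<in> M)"
      using R1 R3 R4 by simp
    show "formally_real (**) Jh = (\<exists>P d. invertible P \<and> mstar s P ** A ** P = diag_mat d \<and>
        (\<exists>M. herm_cone (*) s \<eta> M \<and> (\<forall>i. d i \<in> M)))"
      using R1 R3 R5a[OF c] R5b by blast
  next
    assume "\<eta> = -1 \<and> s = id"
    thus "\<not> formally_real (**) Jh" using R1 R3 R6[OF char] by simp
  qed
qed

end
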